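(* Let $\mathcal N$ be a network with parties $A_1,\dots,A_n$ all of whose sources are bipartite. Let $M$ be an $n\times n$ complex positive semidefinite matrix such that $M_{ij}=0$ whenever $i\neq j$ and $A_i,A_j$ share no source. Then $M$ admits an $\mathcal N$-compatible matrix decomposition if and only if its comparison matrix $\widehat M$ is positive semidefinite.
   Context: A network $\mathcal N$ is a bipartite graph between sources $S_\alpha$ and parties $A_i$ ($i=1,\dots,n$); $\alpha\to i$ means $S_\alpha$ is adjacent to $A_i$; no isolated vertices, and no two sources with comparable sets of adjacent parties. Here every source is adjacent to exactly two parties. $\mathcal N$-compatible matrix decomposition: for each source $\alpha$, let $\mathcal L_\alpha$ be the set of $n\times n$ complex positive semidefinite matrices $M_\alpha$ with $(M_\alpha)_{ij}\neq 0$ only if $\alpha\to i$ and $\alpha\to j$. A positive semidefinite $n\times n$ matrix $M$ admits an $\mathcal N$-compatible matrix decomposition if $M=\sum_\alpha M_\alpha$ with $M_\alpha\in\mathcal L_\alpha$ for all $\alpha$. The comparison matrix $\widehat M$ of $M$ is defined by $\widehat M_{ii}=M_{ii}$ and $\widehat M_{ij}=-|M_{ij}|$ for $i\neq j$. *)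

theory Defs
  imports "HOL-Analysis.Analysis"
begin

text \<open>n x n complex matrices are represented as functions nat => nat => complex,
  only the entries with indices < n being relevant. Parties are 0..n-1.\<close>

definition psd :: "nat \<Rightarrow> (nat \<Rightarrow> nat \<Rightarrow> complex) \<Rightarrow> bool" where
  "psd n M \<longleftrightarrow> (\<forall>x :: nat \<Rightarrow> complex.
      let q = (\<Sum>i<n. \<Sum>j<n. cnj (x i) * M i j * x j) in Im q = 0 \<and> Re q \<ge> 0)"

text \<open>A network: parties 0..n-1, finite set of sources Src, adj a = parties adjacent to source a.\<close>
definition network :: "nat \<Rightarrow> 's set \<Rightarrow> ('s \<Rightarrow> nat set) \<Rightarrow> bool" where
  "network n Src adj \<longleftrightarrow> finite Src
     \<and> (\<forall>a\<in>Src. adj a \<subseteq> {..<n} \<and> adj a \<noteq> {})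
     \<and> (\<forall>i<n. \<exists>a\<in>Src. i \<in> adj a)
     \<and> (\<forall>a\<in>Src. \<forall>b\<in>Src. a \<noteq> b \<longrightarrow> \<not> adj a \<subseteq> adj b)"

definition bipartite_sources :: "'s set \<Rightarrow> ('s \<Rightarrow> nat set) \<Rightarrow> bool" where
  "bipartite_sources Src adj \<longleftrightarrow> (\<forall>a\<in>Src. card (adj a) = 2)"

definition local_matrices :: "nat \<Rightarrow> nat set \<Rightarrow> (nat \<Rightarrow> nat \<Rightarrow> complex) set" where
  "local_matrices n A = {Ma. psd n Ma \<and> (\<forall>i<n. \<forall>j<n. Ma i j \<noteq> 0 \<longrightarrow> i \<in> A \<and> j \<in> A)}"

definition has_network_decomposition ::
    "nat \<Rightarrow> 's set \<Rightarrow> ('s \<Rightarrow> nat set) \<Rightarrow> (nat \<Rightarrow> nat \<Rightarrow> complex) \<Rightarrow> bool" where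
  "has_network_decomposition n Src adj M \<longleftrightarrow>
     (\<exists>Ms :: 's \<Rightarrow> nat \<Rightarrow> nat \<Rightarrow> complex.
        (\<forall>a\<in>Src. Ms a \<in> local_matrices n (adj a))
      \<and> (\<forall>i<n. \<forall>j<n. M i j = (\<Sum>a\<in>Src. Ms a i j)))"

definition comparison_matrix :: "(nat \<Rightarrow> nat \<Rightarrow> complex) \<Rightarrow> nat \<Rightarrow> nat \<Rightarrow> complex" where
  "comparison_matrix M = (\<lambda>i j. if i = j then M i i else - complex_of_real (cmod (M i j)))"

end

theory Submission
  imports Defs
begin


lemma ifm1: "(if P then (x::real) else 0) * y = (if P then x * y else 0)" by simp
lemma ifm2: "y * (if P then (x::real) else 0) = (if P then y * x else 0)" by simp

lemma qsplit:
  fixes A :: "nat \<Rightarrow> nat \<Rightarrow> real"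
  assumes sym: "\<forall>i<Suc m. \<forall>j<Suc m. A i j = A j i"
  shows "(\<Sum>i<Suc m. \<Sum>j<Suc m. x i * A i j * x j) =
    (\<Sum>i<m. \<Sum>j<m. x i * A i j * x j) + 2 * x m * (\<Sum>j<m. A m j * x j) + x m * A m m * x m"
proof -
  have "(\<Sum>i<m. x i * A i m * x m) = x m * (\<Sum>j<m. A m j * x j)"
    by (simp add: sum_distrib_left sym algebra_simps)
  moreover have "(\<Sum>j<m. x m * A m j * x j) = x m * (\<Sum>j<m. A m j * x j)"
    by (simp add: sum_distrib_left algebra_simps)
  ultimately show ?thesis
    by (simp add: sum.distrib)
qed

lemma pos_vec:
  fixes A :: "nat \<Rightarrow> nat \<Rightarrow> real"
  shows "(\<forall>i<n. \<forall>j<n. A i j = A j i) \<Longrightarrow> (\<forall>i<n. \<forall>j<n. i \<noteq> j \<longrightarrow> A i j \<le> 0)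
   \<Longrightarrow> (\<forall>x. (\<Sum>i<n. \<Sum>j<n. x i * A i j * x j) \<ge> 0)
   \<Longrightarrow> \<exists>v. (\<forall>i<n. v i > 0) \<and> (\<forall>i<n. (\<Sum>j<n. A i j * v j) \<ge> 0)"
proof (induction n arbitrary: A)
  case 0
  then show ?case by (rule_tac x="\<lambda>_. 1" in exI) simp
next
  case (Suc m)
  note sym = Suc.prems(1) and zm = Suc.prems(2) and ps = Suc.prems(3)
  have Q: "\<And>x. 0 \<le> (\<Sum>i<m. \<Sum>j<m. x i * A i j * x j) + 2 * x m * (\<Sum>j<m. A m j * x j) + x m * A m m * x m"
    using ps qsplit[OF sym] by metis
  have a0: "A m m \<ge> 0"
    using Q[of "\<lambda>k. if k = m then 1 else 0"] by simp
  show ?case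
  proof (cases "A m m = 0")
    case True
    have row0: "A m j = 0" if "j < m" for j
    proof (rule ccontr)
      assume ne: "A m j \<noteq> 0"
      define t where "t = - (A j j + 1) / (2 * A m j)"
      have "0 \<le> A j j + 2 * t * A m j"
        using Q[of "\<lambda>k. if k = m then t else if k = j then 1 else 0"] that True
        by (simp add: ifm1 ifm2 cong: if_cong)
      also have "\<dots> = -1" using ne by (simp add: t_def field_simps)
      finally show False by simp
    qed
    have "\<exists>v. (\<forall>i<m. v i > 0) \<and> (\<forall>i<m. (\<Sum>j<m. A i j * v j) \<ge> 0)"
    proof (rule Suc.IH)
      show "\<forall>i<m. \<forall>j<m. A i j = A j i" using sym by simp
      show "\<forall>i<m. \<forall>j<m. i \<noteq> j \<longrightarrow> A i j \<le> 0" using zm by simp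
      show "\<forall>x. 0 \<le> (\<Sum>i<m. \<Sum>j<m. x i * A i j * x j)"
      proof
        fix x :: "nat \<Rightarrow> real"
        show "0 \<le> (\<Sum>i<m. \<Sum>j<m. x i * A i j * x j)"
          using Q[of "x(m := 0)"] by simp
      qed
    qed
    then obtain w where w: "\<forall>i<m. w i > 0" "\<forall>i<m. (\<Sum>j<m. A i j * w j) \<ge> 0" by blast
    show ?thesis
    proof (rule exI[of _ "w(m := 1)"], intro conjI allI impI)
      fix i assume "i < Suc m" then show "0 < (w(m:=1)) i" using w by (auto simp: less_Suc_eq)
    next
      fix i assume i: "i < Suc m"
      have colm: "A i m = 0" if "i < m" using row0 sym that by auto
      show "0 \<le> (\<Sum>j<Suc m. A i j * (w(m:=1)) j)"
      proof (cases "i = m")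
        case True
        then show ?thesis using row0 \<open>A m m = 0\<close> by simp
      next
        case False
        then have "i < m" using i by simp
        then show ?thesis using w colm by simp
      qed
    qed
  next
    case False
    define a where "a = A m m"
    have apos: "a > 0" using False a0 a_def by simp
    define S where "S = (\<lambda>i j. A i j - A i m * A m j / a)"
    have "\<exists>v. (\<forall>i<m. v i > 0) \<and> (\<forall>i<m. (\<Sum>j<m. S i j * v j) \<ge> 0)"
    proof (rule Suc.IH)
      show "\<forall>i<m. \<forall>j<m. S i j = S j i" using sym by (simp add: S_def mult.commute)
      show "\<forall>i<m. \<forall>j<m. i \<noteq> j \<longrightarrow> S i j \<le> 0"
      proof (intro allI impI)
        fix i j assume ij: "i < m" "j < m" "i \<noteq> j"
        have "A i m \<le> 0" "A m j \<le> 0" "A i j \<le> 0" using zm ij by auto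
        then have "A i m * A m j / a \<ge> 0" using apos by (simp add: mult_nonpos_nonpos)
        then show "S i j \<le> 0" using \<open>A i j \<le> 0\<close> by (simp add: S_def)
      qed
      show "\<forall>x. 0 \<le> (\<Sum>i<m. \<Sum>j<m. x i * S i j * x j)"
      proof
        fix x :: "nat \<Rightarrow> real"
        define B where "B = (\<Sum>j<m. A m j * x j)"
        have B2: "(\<Sum>i<m. x i * A i m) = B"
          unfolding B_def using sym by (auto intro!: sum.cong)
        have Bc: "(\<Sum>j<m. x j * A m j) = B" unfolding B_def by (simp add: mult.commute)
        have "(\<Sum>i<m. \<Sum>j<m. x i * S i j * x j)
            = (\<Sum>i<m. \<Sum>j<m. x i * A i j * x j) - (\<Sum>i<m. x i * A i m) * (\<Sum>j<m. A m j * x j) / a"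
          unfolding sum_product
          by (simp only: sum_divide_distrib sum_subtractf[symmetric]) (intro sum.cong refl; simp add: S_def algebra_simps)
        also have "\<dots> = (\<Sum>i<m. \<Sum>j<m. x i * A i j * x j) - B * B / a"
          using B2 B_def by simp
        also have "\<dots> = (\<Sum>i<m. \<Sum>j<m. (x(m := -B/a)) i * A i j * (x(m := -B/a)) j)
              + 2 * (-B/a) * (\<Sum>j<m. A m j * (x(m := -B/a)) j) + (-B/a) * A m m * (-B/a)"
          using apos Bc by (simp add: B_def[symmetric] a_def[symmetric] field_simps power2_eq_square)
        also have "\<dots> \<ge> 0" using Q[of "x(m := -B/a)"] by simp
        finally show "0 \<le> (\<Sum>i<m. \<Sum>j<m. x i * S i j * x j)" .
      qed
    qed
    then obtain w where w: "\<forall>i<m. w i > 0" "\<forall>i<m. (\<Sum>j<m. S i j * w j) \<ge> 0" by blast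
    define B where "B = (\<Sum>j<m. A m j * w j)"
    have Sw: "(\<Sum>j<m. S i j * w j) = (\<Sum>j<m. A i j * w j) - A i m * B / a" for i
      by (simp add: S_def B_def algebra_simps sum_subtractf sum_distrib_left sum_divide_distrib)
    have nonp: "A m j * w j \<le> 0" if "j < m" for j
    proof -
      have "A m j \<le> 0" using zm that by auto
      moreover have "w j > 0" using w that by auto
      ultimately show ?thesis by (simp add: mult_nonpos_nonneg)
    qed
    have Ble: "B \<le> 0" unfolding B_def
      by (rule sum_nonpos) (use nonp in auto)
    show ?thesis
    proof (cases "B = 0")
      case True
      have rowz: "A m j = 0" if "j < m" for j
      proof -
        have "(\<Sum>j<m. -(A m j * w j)) = 0" using True by (simp add: B_def sum_negf)
        then have "\<forall>j\<in>{..<m}. -(A m j * w j) = 0"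
          using sum_nonneg_eq_0_iff[of "{..<m}" "\<lambda>j. -(A m j * w j)"] nonp by auto
        then have "A m j = 0 \<or> w j = 0" using that by auto
        then show ?thesis using that w by force
      qed
      show ?thesis
      proof (rule exI[of _ "w(m:=1)"], intro conjI allI impI)
        fix i assume "i < Suc m" then show "0 < (w(m:=1)) i" using w by (auto simp: less_Suc_eq)
      next
        fix i assume i: "i < Suc m"
        show "0 \<le> (\<Sum>j<Suc m. A i j * (w(m:=1)) j)"
        proof (cases "i = m")
          case True
          then show ?thesis using rowz a0 by simp
        next
          case False
          then have im: "i < m" using i by simp
          have "A i m = 0" using rowz sym im by auto
          then show ?thesis using w(2) im Sw[of i] True by force
        qed
      qed
    next
      case False
      then have Bneg: "B < 0" using Ble by simp
      show ?thesis
      proof (rule exI[of _ "w(m:= -B/a)"], intro conjI allI impI)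
        fix i assume "i < Suc m" then show "0 < (w(m:= -B/a)) i" using w Bneg apos
          by (auto simp: less_Suc_eq divide_neg_pos)
      next
        fix i assume i: "i < Suc m"
        show "0 \<le> (\<Sum>j<Suc m. A i j * (w(m:=-B/a)) j)"
        proof (cases "i = m")
          case True
          then show ?thesis using apos by (simp add: B_def[symmetric] a_def[symmetric])
        next
          case False
          then have im: "i < m" using i by simp
          have h: "0 \<le> (\<Sum>j<m. S i j * w j)" using w(2) im by auto
          then show ?thesis using Sw[of i] im by (simp; linarith)
        qed
      qed
    qed
  qed
qed


definition qf :: "nat \<Rightarrow> (nat \<Rightarrow> nat \<Rightarrow> complex) \<Rightarrow> (nat \<Rightarrow> complex) \<Rightarrow> complex" where
  "qf n N x = (\<Sum>i<n. \<Sum>j<n. cnj (x i) * N i j * x j)"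

lemma psd_qf: "psd n N \<longleftrightarrow> (\<forall>x. Im (qf n N x) = 0 \<and> Re (qf n N x) \<ge> 0)"
  by (simp add: psd_def qf_def Let_def)

lemma qf_supp:
  assumes T: "T \<subseteq> {..<n}"
    and z: "\<forall>k<n. \<forall>l<n. cnj (x k) * N k l * x l \<noteq> 0 \<longrightarrow> k \<in> T \<and> l \<in> T"
  shows "qf n N x = (\<Sum>k\<in>T. \<Sum>l\<in>T. cnj (x k) * N k l * x l)"
proof -
  have fT: "finite T" using T finite_subset by blast
  have z': "cnj (x k) * N k l * x l = 0" if "k < n" "l < n" "k \<notin> T \<or> l \<notin> T" for k l
    using z that by blast
  have "qf n N x = (\<Sum>k<n. \<Sum>l\<in>T. cnj (x k) * N k l * x l)"
    unfolding qf_def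
    by (intro sum.cong refl sum.mono_neutral_right) (use T z' fT in auto)
  also have "\<dots> = (\<Sum>k\<in>T. \<Sum>l\<in>T. cnj (x k) * N k l * x l)"
    by (intro sum.mono_neutral_right) (use T z' fT in \<open>auto intro!: sum.neutral\<close>)
  finally show ?thesis .
qed

lemma qf_single:
  assumes "i < n"
  shows "qf n N (\<lambda>k. if k = i then 1 else 0) = N i i"
  using qf_supp[of "{i}" n "\<lambda>k. if k = i then 1 else 0" N] assms by auto

lemma qf_pair:
  assumes "i < n" "j < n" "i \<noteq> j" "\<forall>k. k \<noteq> i \<and> k \<noteq> j \<longrightarrow> x k = 0"
  shows "qf n N x = cnj (x i) * N i i * x i + cnj (x i) * N i j * x j + cnj (x j) * N j i * x i
     + cnj (x j) * N j j * x j"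
proof -
  have "qf n N x = (\<Sum>k\<in>{i,j}. \<Sum>l\<in>{i,j}. cnj (x k) * N k l * x l)"
    by (rule qf_supp) (use assms in auto)
  then show ?thesis using assms(3) by (simp add: algebra_simps)
qed

lemma psd_diag:
  assumes "psd n N" "i < n"
  shows "N i i = of_real (Re (N i i))" "Re (N i i) \<ge> 0"
proof -
  have "Im (qf n N (\<lambda>k. if k = i then 1 else 0)) = 0 \<and> 0 \<le> Re (qf n N (\<lambda>k. if k = i then 1 else 0))"
    using assms(1) unfolding psd_qf by blast
  then have h: "Im (N i i) = 0" "Re (N i i) \<ge> 0" unfolding qf_single[OF assms(2)] by auto
  show "N i i = of_real (Re (N i i))" using h(1) by (simp add: complex_eq_iff)
  show "Re (N i i) \<ge> 0" by (rule h(2))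
qed

lemma psd_herm:
  assumes "psd n N" "i < n" "j < n"
  shows "N j i = cnj (N i j)"
proof (cases "i = j")
  case True
  then show ?thesis using psd_diag[OF assms(1,2)] by (metis complex_cnj_complex_of_real)
next
  case False
  have d1: "Im (N i i) = 0" "Im (N j j) = 0"
    using psd_diag(1)[OF assms(1,2)] psd_diag(1)[OF assms(1,3)] by (simp_all add: complex_eq_iff)
  let ?x1 = "\<lambda>k. if k = i then 1 else if k = j then 1 else (0::complex)"
  let ?x2 = "\<lambda>k. if k = i then 1 else if k = j then \<i> else (0::complex)"
  have i1: "Im (qf n N ?x1) = 0" "Im (qf n N ?x2) = 0" using assms(1) unfolding psd_qf by blast+
  have "qf n N ?x1 = N i i + N i j + N j i + N j j"
    using qf_pair[OF assms(2,3) False, of ?x1 N] False by simp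
  then have e1: "Im (N i j) + Im (N j i) = 0"
    using i1(1) d1 by simp
  have "qf n N ?x2 = N i i + N i j * \<i> - \<i> * N j i + N j j"
    using qf_pair[OF assms(2,3) False, of ?x2 N] False by (simp add: algebra_simps)
  then have e2: "Re (N i j) - Re (N j i) = 0"
    using i1(2) d1 by simp
  show ?thesis using e1 e2 by (simp add: complex_eq_iff)
qed

lemma real2:
  fixes p q c a b :: real
  assumes "p \<ge> 0" "q \<ge> 0" "c \<ge> 0" "c^2 \<le> p * q"
  shows "2 * c * a * b \<le> p * a^2 + q * b^2"
proof (cases "p = 0")
  case True
  then have "c * c \<le> 0" using assms by (simp add: power2_eq_square)
  then have "c = 0" using True assms mult_pos_pos[of c c] by (smt (verit))
  then show ?thesis using True assms by simp
next
  case False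
  then have pp: "p > 0" using assms by simp
  have "p * (p * a^2 + q * b^2 - 2 * c * a * b) = (p * a - c * b)^2 + (p * q - c^2) * b^2"
    by (simp add: power2_eq_square algebra_simps)
  also have "\<dots> \<ge> 0" using assms by simp
  finally have "p * (p * a^2 + q * b^2 - 2 * c * a * b) \<ge> 0" .
  then show ?thesis using pp by (simp add: zero_le_mult_iff)
qed

lemma psd2:
  assumes "i < n" "j < n" "i \<noteq> j"
    and supp: "\<forall>k<n. \<forall>l<n. N k l \<noteq> 0 \<longrightarrow> k \<in> {i,j} \<and> l \<in> {i,j}"
    and "N i i = of_real p" "N j j = of_real q" "N j i = cnj (N i j)"
    and "p \<ge> 0" "q \<ge> 0" "cmod (N i j)^2 \<le> p * q"
  shows "psd n N"
  unfolding psd_qf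
proof
  fix x :: "nat \<Rightarrow> complex"
  define c where "c = N i j"
  define z where "z = cnj (x i) * c * x j"
  have "qf n N x = (\<Sum>k\<in>{i,j}. \<Sum>l\<in>{i,j}. cnj (x k) * N k l * x l)"
    by (rule qf_supp) (use assms in auto)
  also have "\<dots> = of_real p * (cnj (x i) * x i) + of_real q * (cnj (x j) * x j) + z + cnj z"
    using assms by (simp add: z_def c_def algebra_simps)
  also have "\<dots> = of_real (p * cmod (x i) ^ 2 + q * cmod (x j) ^2 + 2 * Re z)"
  proof -
    have a1: "cnj (x i) * x i = of_real (cmod (x i) ^ 2)" "cnj (x j) * x j = of_real (cmod (x j) ^ 2)"
      by (metis complex_norm_square mult.commute)+
    have a2: "z + cnj z = of_real (2 * Re z)" by (simp add: complex_add_cnj)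
    show ?thesis unfolding a1 by (simp add: add.assoc a2)
  qed
  finally have qe: "qf n N x = of_real (p * cmod (x i) ^ 2 + q * cmod (x j) ^2 + 2 * Re z)" .
  have "- Re z \<le> cmod z" using abs_Re_le_cmod[of z] by simp
  also have "cmod z = cmod c * cmod (x i) * cmod (x j)" by (simp add: z_def norm_mult)
  finally have "2 * (- Re z) \<le> 2 * cmod c * cmod (x i) * cmod (x j)" by simp
  also have "\<dots> \<le> p * cmod (x i) ^ 2 + q * cmod (x j) ^2"
    by (rule real2) (use assms c_def in auto)
  finally show "Im (qf n N x) = 0 \<and> 0 \<le> Re (qf n N x)" using qe by simp
qed

lemma psd_det:
  assumes "psd n N" "i < n" "j < n" "i \<noteq> j"
  shows "cmod (N i j)^2 \<le> Re (N i i) * Re (N j j)"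
proof -
  define p where "p = Re (N i i)"
  define q where "q = Re (N j j)"
  define c where "c = N i j"
  define C where "C = cmod c ^ 2"
  have Np: "N i i = of_real p" "N j j = of_real q" using psd_diag assms p_def q_def by blast+
  have pq: "p \<ge> 0" "q \<ge> 0" using psd_diag assms p_def q_def by blast+
  have h: "N j i = cnj c" using psd_herm assms c_def by blast
  have key: "0 \<le> p * C - 2 * t * C + q * t^2" for t :: real
  proof -
    let ?x = "\<lambda>k. if k = i then - c else if k = j then of_real t else 0"
    have "qf n N ?x = cnj (-c) * of_real p * (-c) + cnj (-c) * c * of_real t
        + of_real t * cnj c * (-c) + of_real t * of_real q * of_real t"
      using qf_pair[OF assms(2,3,4), of ?x N] assms(4) Np h c_def by simp
    also have "\<dots> = of_real p * (cnj c * c) - 2 * of_real t * (cnj c * c) + of_real (q * t^2)"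
      by (simp add: algebra_simps power2_eq_square)
    also have "cnj c * c = of_real C"
      unfolding C_def by (metis complex_norm_square mult.commute)
    also have "of_real p * of_real C - 2 * of_real t * of_real C + of_real (q * t^2) = (of_real (p * C - 2 * t * C + q * t^2) :: complex)"
      by simp
    finally show ?thesis using assms(1) unfolding psd_qf by (metis Re_complex_of_real)
  qed
  have C0: "C \<ge> 0" by (simp add: C_def)
  show ?thesis
  proof (cases "q = 0")
    case True
    have "0 \<le> p * C - 2 * (p + 1) * C" using key[of "p+1"] True by simp
    then have "(p + 2) * C \<le> 0" by (simp add: algebra_simps)
    then have "C \<le> 0" using pq by (simp add: mult_le_0_iff)
    then show ?thesis using C0 pq True by (simp add: C_def c_def p_def q_def)
  next
    case False
    then have qp: "q > 0" using pq by simp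
    have "0 \<le> p * C - 2 * (C/q) * C + q * (C/q)^2" using key by blast
    also have "\<dots> = (C / q) * (p * q - C)" using qp by (simp add: field_simps power2_eq_square)
    finally have "0 \<le> (C / q) * (p * q - C)" .
    then have "C = 0 \<or> C \<le> p * q"
    proof (cases "C = 0")
      case False
      then have "C / q > 0" using qp C0 by simp
      have "C \<le> p * q"
      proof (rule ccontr)
        assume "\<not> C \<le> p * q"
        then have "p * q - C < 0" by simp
        from mult_pos_neg[OF \<open>C / q > 0\<close> this]
        show False using \<open>0 \<le> (C / q) * (p * q - C)\<close> by linarith
      qed
      then show ?thesis by simp
    qed simp
    then show ?thesis using pq by (auto simp: C_def c_def p_def q_def)
  qed
qed

lemma sum_single:
  assumes "finite S" "a \<in> S" "\<And>b. b \<in> S \<Longrightarrow> b \<noteq> a \<Longrightarrow> f b = 0"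
  shows "sum f S = f a"
  using sum.remove[OF assms(1,2), of f] sum.neutral[of "S-{a}" f] assms(3) by auto

lemma psd_sum:
  assumes "finite S" "\<forall>a\<in>S. psd n (N a)" "\<forall>i<n. \<forall>j<n. M i j = (\<Sum>a\<in>S. N a i j)"
  shows "psd n M"
  unfolding psd_qf
proof
  fix x
  have "qf n M x = (\<Sum>i<n. \<Sum>j<n. \<Sum>a\<in>S. cnj (x i) * N a i j * x j)"
    unfolding qf_def using assms(3) by (simp add: sum_distrib_left sum_distrib_right)
  also have "\<dots> = (\<Sum>i<n. \<Sum>a\<in>S. \<Sum>j<n. cnj (x i) * N a i j * x j)"
    by (rule sum.cong[OF refl], rule sum.swap)
  also have "\<dots> = (\<Sum>a\<in>S. qf n (N a) x)"
    unfolding qf_def by (rule sum.swap)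
  finally have "qf n M x = (\<Sum>a\<in>S. qf n (N a) x)" .
  then show "Im (qf n M x) = 0 \<and> 0 \<le> Re (qf n M x)"
    using assms(2) unfolding psd_qf by (simp add: Im_sum Re_sum sum_nonneg)
qed



lemma net_pair:
  assumes "network n Src adj" "bipartite_sources Src adj" "a \<in> Src"
  obtains i j where "adj a = {i, j}" "i \<noteq> j" "i < n" "j < n"
proof -
  have "card (adj a) = 2" using assms unfolding bipartite_sources_def by auto
  then obtain i j where "adj a = {i,j}" "i \<noteq> j" by (auto simp: card_2_iff)
  moreover have "adj a \<subseteq> {..<n}" using assms unfolding network_def by auto
  ultimately show ?thesis by (intro that[of i j]) auto
qed

lemma net_uniq:
  assumes "network n Src adj" "bipartite_sources Src adj" "a \<in> Src" "b \<in> Src"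
    "i \<noteq> j" "i \<in> adj a" "j \<in> adj a" "i \<in> adj b" "j \<in> adj b"
  shows "a = b"
proof -
  have "adj a = {i,j}"
  proof -
    obtain i' j' where "adj a = {i', j'}" using net_pair[OF assms(1,2,3)] by blast
    then show ?thesis using assms(5,6,7) by auto
  qed
  moreover have "adj b = {i,j}"
  proof -
    obtain i' j' where "adj b = {i', j'}" using net_pair[OF assms(1,2,4)] by blast
    then show ?thesis using assms(5,8,9) by auto
  qed
  ultimately have "adj a \<subseteq> adj b" by simp
  then show ?thesis using assms(1,3,4) unfolding network_def by blast
qed

lemma backward:
  fixes n :: nat and Src :: "'s set" and adj :: "'s \<Rightarrow> nat set"
    and M :: "nat \<Rightarrow> nat \<Rightarrow> complex"
  assumes net: "network n Src adj"
    and bip: "bipartite_sources Src adj"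
    and pM: "psd n M"
    and z: "\<And>i j. i < n \<Longrightarrow> j < n \<Longrightarrow> i \<noteq> j \<Longrightarrow> \<not> (\<exists>a\<in>Src. i \<in> adj a \<and> j \<in> adj a) \<Longrightarrow> M i j = 0"
    and pC: "psd n (comparison_matrix M)"
  shows "has_network_decomposition n Src adj M"
proof -
  have finS: "finite Src" using net unfolding network_def by auto
  have adjn: "adj a \<subseteq> {..<n}" if "a \<in> Src" for a using net that unfolding network_def by auto
  have cov: "\<exists>a\<in>Src. i \<in> adj a" if "i < n" for i using net that unfolding network_def by auto
  have herm: "M j i = cnj (M i j)" if "i < n" "j < n" for i j using psd_herm[OF pM that] .
  have cm: "cmod (M j i) = cmod (M i j)" if "i < n" "j < n" for i j using herm[OF that] by simp
  define A where "A = (\<lambda>i j. Re (comparison_matrix M i j))"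
  have Aof: "comparison_matrix M i j = of_real (A i j)" if "i < n" "j < n" for i j
    using psd_diag(1)[OF pM that(1)] unfolding A_def comparison_matrix_def by auto
  have Aoff: "A i j = - cmod (M i j)" if "i \<noteq> j" for i j
    using that unfolding A_def comparison_matrix_def by simp
  have Adiag: "A i i = Re (M i i)" for i unfolding A_def comparison_matrix_def by simp
  have "\<exists>v. (\<forall>i<n. v i > 0) \<and> (\<forall>i<n. (\<Sum>j<n. A i j * v j) \<ge> 0)"
  proof (rule pos_vec)
    show "\<forall>i<n. \<forall>j<n. A i j = A j i"
    proof (intro allI impI)
      fix i j assume ij: "i < n" "j < n"
      show "A i j = A j i"
        by (cases "i = j") (use cm[OF ij] Aoff[of i j] Aoff[of j i] in auto)
    qed
    show "\<forall>i<n. \<forall>j<n. i \<noteq> j \<longrightarrow> A i j \<le> 0" by (simp add: Aoff)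
    show "\<forall>x. 0 \<le> (\<Sum>i<n. \<Sum>j<n. x i * A i j * x j)"
    proof
      fix x :: "nat \<Rightarrow> real"
      have "qf n (comparison_matrix M) (\<lambda>k. of_real (x k)) = of_real (\<Sum>i<n. \<Sum>j<n. x i * A i j * x j)"
        unfolding qf_def by (simp add: Aof)
      moreover have "Re (qf n (comparison_matrix M) (\<lambda>k. of_real (x k))) \<ge> 0"
        using pC unfolding psd_qf by blast
      ultimately show "0 \<le> (\<Sum>i<n. \<Sum>j<n. x i * A i j * x j)" by simp
    qed
  qed
  then obtain v where vpos: "\<And>i. i < n \<Longrightarrow> v i > 0" and vrow: "\<And>i. i < n \<Longrightarrow> (\<Sum>j<n. A i j * v j) \<ge> 0"
    by blast
  define g where "g = (\<lambda>i t. cmod (M i t) * v t / v i)"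
  define r where "r = (\<lambda>i. (\<Sum>j<n. A i j * v j) / v i)"
  define Si where "Si = (\<lambda>i. {a \<in> Src. i \<in> adj a})"
  define D where "D = (\<lambda>a k. (\<Sum>t\<in>adj a - {k}. g k t) + r k / real (card (Si k)))"
  define Ms where "Ms = (\<lambda>a k l. if k \<in> adj a \<and> l \<in> adj a then (if k = l then of_real (D a k) else M k l) else (0::complex))"
  have r0: "r i \<ge> 0" if "i < n" for i unfolding r_def using vrow[OF that] vpos[OF that] by simp
  have g0: "g i t \<ge> 0" if "i < n" "t < n" for i t unfolding g_def using vpos[OF that(1)] vpos[OF that(2)] by simp
  have finSi: "finite (Si i)" for i unfolding Si_def using finS by simp
  have cardSi: "card (Si i) > 0" if "i < n" for i
    using cov[OF that] finSi[of i] unfolding Si_def by (auto simp: card_gt_0_iff)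
  have rowsum: "(\<Sum>t\<in>{..<n}-{i}. g i t) = Re (M i i) - r i" if "i < n" for i
  proof -
    have "(\<Sum>j<n. A i j * v j) = A i i * v i + (\<Sum>j\<in>{..<n}-{i}. A i j * v j)"
      using sum.remove[of "{..<n}" i "\<lambda>j. A i j * v j"] that by simp
    also have "(\<Sum>j\<in>{..<n}-{i}. A i j * v j) = - (\<Sum>j\<in>{..<n}-{i}. cmod (M i j) * v j)"
      by (simp add: Aoff sum_negf[symmetric])
    finally have e: "(\<Sum>j<n. A i j * v j) = Re (M i i) * v i - (\<Sum>j\<in>{..<n}-{i}. cmod (M i j) * v j)"
      by (simp add: Adiag)
    have "(\<Sum>t\<in>{..<n}-{i}. g i t) = (\<Sum>j\<in>{..<n}-{i}. cmod (M i j) * v j) / v i"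
      unfolding g_def by (simp add: sum_divide_distrib)
    also have "\<dots> = Re (M i i) - r i"
      unfolding r_def e using vpos[OF that] by (simp add: field_simps)
    finally show ?thesis .
  qed
  have nbsum: "(\<Sum>a\<in>Si i. \<Sum>t\<in>adj a - {i}. g i t) = (\<Sum>t\<in>{..<n}-{i}. g i t)" if "i < n" for i
  proof -
    have "(\<Sum>a\<in>Si i. \<Sum>t\<in>adj a - {i}. g i t) = sum (g i) (\<Union>a\<in>Si i. adj a - {i})"
    proof (rule sum.UNION_disjoint[symmetric])
      show "finite (Si i)" by (rule finSi)
      show "\<forall>a\<in>Si i. finite (adj a - {i})"
        using adjn unfolding Si_def by (auto intro: finite_subset)
      show "\<forall>a\<in>Si i. \<forall>b\<in>Si i. a \<noteq> b \<longrightarrow> (adj a - {i}) \<inter> (adj b - {i}) = {}"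
      proof (intro ballI impI)
        fix a b assume ab: "a \<in> Si i" "b \<in> Si i" "a \<noteq> b"
        show "(adj a - {i}) \<inter> (adj b - {i}) = {}"
        proof (rule ccontr)
          assume "(adj a - {i}) \<inter> (adj b - {i}) \<noteq> {}"
          then obtain t where t: "t \<in> adj a" "t \<in> adj b" "t \<noteq> i" by blast
          have "a = b" using net_uniq[OF net bip _ _ t(3)[symmetric]] ab t unfolding Si_def by blast
          then show False using ab by simp
        qed
      qed
    qed
    also have "\<dots> = (\<Sum>t\<in>{..<n}-{i}. g i t)"
    proof (rule sum.mono_neutral_left)
      show "finite ({..<n} - {i})" by simp
      show "(\<Union>a\<in>Si i. adj a - {i}) \<subseteq> {..<n} - {i}" using adjn unfolding Si_def by auto
      show "\<forall>t\<in>{..<n} - {i} - (\<Union>a\<in>Si i. adj a - {i}). g i t = 0"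
      proof
        fix t assume t: "t \<in> {..<n} - {i} - (\<Union>a\<in>Si i. adj a - {i})"
        then have "\<not> (\<exists>a\<in>Src. i \<in> adj a \<and> t \<in> adj a)" unfolding Si_def by auto
        then have "M i t = 0" using z[OF that, of t] t by auto
        then show "g i t = 0" unfolding g_def by simp
      qed
    qed
    finally show ?thesis .
  qed
  have Dsum: "(\<Sum>a\<in>Si i. D a i) = Re (M i i)" if "i < n" for i
  proof -
    have "(\<Sum>a\<in>Si i. D a i) = (\<Sum>a\<in>Si i. \<Sum>t\<in>adj a - {i}. g i t) + real (card (Si i)) * (r i / real (card (Si i)))"
      unfolding D_def by (simp add: sum.distrib)
    also have "\<dots> = Re (M i i) - r i + r i"
      using nbsum[OF that] rowsum[OF that] cardSi[OF that] by simp
    finally show ?thesis by simp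
  qed
  show ?thesis
    unfolding has_network_decomposition_def
  proof (rule exI[of _ Ms], intro conjI ballI allI impI)
    fix a assume a: "a \<in> Src"
    obtain i j where ij: "adj a = {i, j}" "i \<noteq> j" "i < n" "j < n" using net_pair[OF net bip a] .
    have Di: "D a i \<ge> g i j" "D a i \<ge> 0"
    proof -
      have "adj a - {i} = {j}" using ij by auto
      then have "D a i = g i j + r i / real (card (Si i))" unfolding D_def by simp
      moreover have "r i / real (card (Si i)) \<ge> 0" using r0[OF ij(3)] by simp
      ultimately show "D a i \<ge> g i j" "D a i \<ge> 0" using g0[OF ij(3,4)] by auto
    qed
    have Dj: "D a j \<ge> g j i" "D a j \<ge> 0"
    proof -
      have "adj a - {j} = {i}" using ij by auto
      then have "D a j = g j i + r j / real (card (Si j))" unfolding D_def by simp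
      moreover have "r j / real (card (Si j)) \<ge> 0" using r0[OF ij(4)] by simp
      ultimately show "D a j \<ge> g j i" "D a j \<ge> 0" using g0[OF ij(4,3)] by auto
    qed
    have gg: "g i j * g j i = cmod (M i j) ^ 2"
      unfolding g_def using vpos[OF ij(3)] vpos[OF ij(4)] cm[OF ij(3,4)]
      by (simp add: field_simps power2_eq_square)
    have "psd n (Ms a)"
    proof (rule psd2[OF ij(3,4,2)])
      show "\<forall>k<n. \<forall>l<n. Ms a k l \<noteq> 0 \<longrightarrow> k \<in> {i, j} \<and> l \<in> {i, j}"
        using ij(1) unfolding Ms_def by auto
      show "Ms a i i = of_real (D a i)" "Ms a j j = of_real (D a j)" using ij unfolding Ms_def by auto
      show "Ms a j i = cnj (Ms a i j)" using ij herm[OF ij(3,4)] unfolding Ms_def by auto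
      show "D a i \<ge> 0" "D a j \<ge> 0" using Di Dj by auto
      have "cmod (M i j) ^ 2 \<le> D a i * D a j"
        using gg mult_mono[OF Di(1) Dj(1) Di(2) g0[OF ij(4,3)]] by simp
      then show "cmod (Ms a i j)^2 \<le> D a i * D a j" using ij unfolding Ms_def by auto
    qed
    moreover have "\<forall>k<n. \<forall>l<n. Ms a k l \<noteq> 0 \<longrightarrow> k \<in> adj a \<and> l \<in> adj a"
      unfolding Ms_def by auto
    ultimately show "Ms a \<in> local_matrices n (adj a)" unfolding local_matrices_def by blast
  next
    fix i j assume i: "i < n" and j: "j < n"
    show "M i j = (\<Sum>a\<in>Src. Ms a i j)"
    proof (cases "i = j")
      case True
      have "(\<Sum>a\<in>Src. Ms a i j) = (\<Sum>a\<in>Src. if i \<in> adj a then of_real (D a i) else 0)"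
        unfolding Ms_def True by (intro sum.cong) auto
      also have "\<dots> = (\<Sum>a\<in>Si i. of_real (D a i))"
        unfolding Si_def by (rule sum.inter_filter[symmetric, OF finS])
      also have "\<dots> = of_real (Re (M i i))" unfolding of_real_sum[symmetric] using Dsum[OF i] by simp
      also have "\<dots> = M i i" using psd_diag(1)[OF pM i] by simp
      finally show ?thesis using True by simp
    next
      case ne: False
      show ?thesis
      proof (cases "\<exists>a\<in>Src. i \<in> adj a \<and> j \<in> adj a")
        case True
        then obtain a where a: "a \<in> Src" "i \<in> adj a" "j \<in> adj a" by blast
        have "(\<Sum>b\<in>Src. Ms b i j) = Ms a i j"
        proof (rule sum_single[OF finS a(1)])
          fix b assume b: "b \<in> Src" "b \<noteq> a"
          show "Ms b i j = 0"
            using net_uniq[OF net bip a(1) b(1) ne a(2,3)] b(2) unfolding Ms_def by auto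
        qed
        then show ?thesis using a ne unfolding Ms_def by simp
      next
        case False
        have "(\<Sum>b\<in>Src. Ms b i j) = 0"
          by (rule sum.neutral) (use False in \<open>auto simp: Ms_def\<close>)
        then show ?thesis using z[OF i j ne False] by simp
      qed
    qed
  qed
qed

theorem lemma5:
  fixes n :: nat and Src :: "'s set" and adj :: "'s \<Rightarrow> nat set"
    and M :: "nat \<Rightarrow> nat \<Rightarrow> complex"
  assumes "network n Src adj"
    and "bipartite_sources Src adj"
    and "psd n M"
    and "\<And>i j. i < n \<Longrightarrow> j < n \<Longrightarrow> i \<noteq> j \<Longrightarrow> \<not> (\<exists>a\<in>Src. i \<in> adj a \<and> j \<in> adj a) \<Longrightarrow> M i j = 0"
  shows "has_network_decomposition n Src adj M \<longleftrightarrow> psd n (comparison_matrix M)"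
proof
  note net = assms(1) and bip = assms(2) and pM = assms(3) and z = assms(4)
  have finS: "finite Src" using net unfolding network_def by auto
  assume "has_network_decomposition n Src adj M"
  then obtain Ms where Ms: "\<forall>a\<in>Src. Ms a \<in> local_matrices n (adj a)"
    "\<forall>i<n. \<forall>j<n. M i j = (\<Sum>a\<in>Src. Ms a i j)"
    unfolding has_network_decomposition_def by blast
  have Mpsd: "psd n (Ms a)" and Msupp: "\<And>i j. i < n \<Longrightarrow> j < n \<Longrightarrow> Ms a i j \<noteq> 0 \<Longrightarrow> i \<in> adj a \<and> j \<in> adj a"
    if "a \<in> Src" for a using Ms(1) that unfolding local_matrices_def by auto
  show "psd n (comparison_matrix M)"
  proof (rule psd_sum[OF finS, of _ "\<lambda>a. comparison_matrix (Ms a)"], intro ballI)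
    fix a assume a: "a \<in> Src"
    obtain i j where ij: "adj a = {i, j}" "i \<noteq> j" "i < n" "j < n" using net_pair[OF net bip a] .
    let ?N = "comparison_matrix (Ms a)"
    show "psd n ?N"
    proof (rule psd2[OF ij(3,4,2)])
      show "\<forall>k<n. \<forall>l<n. ?N k l \<noteq> 0 \<longrightarrow> k \<in> {i, j} \<and> l \<in> {i, j}"
        using Msupp[OF a] ij(1) unfolding comparison_matrix_def by (auto split: if_splits)
      show "?N i i = of_real (Re (Ms a i i))" "?N j j = of_real (Re (Ms a j j))"
        using psd_diag[OF Mpsd[OF a]] ij unfolding comparison_matrix_def by auto
      show "?N j i = cnj (?N i j)"
        using psd_herm[OF Mpsd[OF a] ij(3,4)] ij(2) unfolding comparison_matrix_def by auto
      show "Re (Ms a i i) \<ge> 0" "Re (Ms a j j) \<ge> 0" using psd_diag[OF Mpsd[OF a]] ij by auto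
      show "cmod (?N i j)^2 \<le> Re (Ms a i i) * Re (Ms a j j)"
        using psd_det[OF Mpsd[OF a] ij(3,4,2)] ij(2) unfolding comparison_matrix_def by simp
    qed
  next
    show "\<forall>i<n. \<forall>j<n. comparison_matrix M i j = (\<Sum>a\<in>Src. comparison_matrix (Ms a) i j)"
    proof (intro allI impI)
      fix i j assume ij: "i < n" "j < n"
      show "comparison_matrix M i j = (\<Sum>a\<in>Src. comparison_matrix (Ms a) i j)"
      proof (cases "i = j")
        case True
        then show ?thesis using Ms(2) ij unfolding comparison_matrix_def by simp
      next
        case ne: False
        show ?thesis
        proof (cases "\<exists>a\<in>Src. i \<in> adj a \<and> j \<in> adj a")
          case True
          then obtain a where a: "a \<in> Src" "i \<in> adj a" "j \<in> adj a" by blast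
          have oth: "Ms b i j = 0" if "b \<in> Src" "b \<noteq> a" for b
            using Msupp[OF that(1) ij] net_uniq[OF net bip a(1) that(1) ne a(2,3)] that(2) by auto
          have s1: "(\<Sum>b\<in>Src. Ms b i j) = Ms a i j"
            by (rule sum_single[OF finS a(1)]) (use oth in auto)
          have s2: "(\<Sum>b\<in>Src. comparison_matrix (Ms b) i j) = comparison_matrix (Ms a) i j"
            by (rule sum_single[OF finS a(1)]) (use oth ne in \<open>auto simp: comparison_matrix_def\<close>)
          show ?thesis using s1 s2 Ms(2) ij ne unfolding comparison_matrix_def by simp
        next
          case False
          have oth: "Ms b i j = 0" if "b \<in> Src" for b
            using Msupp[OF that ij] False that by auto
          then show ?thesis using z[OF ij ne False] ne unfolding comparison_matrix_def by simp
        qed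
      qed
    qed
  qed
next
  show "psd n (comparison_matrix M) \<Longrightarrow> has_network_decomposition n Src adj M"
    by (rule backward[OF assms])
qed


end
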